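(* In $M_2(\mathbb{C})[x]$ let $\beta_0=e_{12}$ and $\beta_1=Ix+e_{21}x^2$. Then the set $$\{\beta_1^j\beta_0: j\ge0\}\cup\{\beta_1^j\beta_0\beta_1\beta_0: j\ge0\}$$ is linearly independent over $\mathbb{C}$.
   Context: $e_{r,s}$ denotes the $2\times2$ matrix with $1$ in entry $(r,s)$ and zeros elsewhere; $I$ is the identity matrix. *)

theory Defs
  imports "HOL-Analysis.Analysis" "HOL-Computational_Algebra.Polynomial"
begin

text \<open>M_2(C)[x] is represented via the canonical ring isomorphism
  M_2(C)[x] = M_2(C[x]): 2x2 matrices with entries in complex polynomials,
  multiplied with the matrix product (**).\<close>

type_synonym mpoly2 = "complex poly ^ 2 ^ 2"

definition mpow :: "mpoly2 \<Rightarrow> nat \<Rightarrow> mpoly2" where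
  "mpow A n = (((**) A) ^^ n) (mat 1)"

definition csmult :: "complex \<Rightarrow> mpoly2 \<Rightarrow> mpoly2" where
  "csmult c M = (\<chi> i j. smult c (M $ i $ j))"

definition e12 :: mpoly2 where
  "e12 = (\<chi> i j. if i = 1 \<and> j = 2 then 1 else 0)"

definition e21 :: mpoly2 where
  "e21 = (\<chi> i j. if i = 2 \<and> j = 1 then 1 else 0)"

definition beta0 :: mpoly2 where
  "beta0 = e12"

definition beta1 :: mpoly2 where
  "beta1 = mat [:0, 1:] + (\<chi> i j. [:0, 0, 1:] * e21 $ i $ j)"

end

theory Submission
  imports Defs
begin

definition M :: "complex poly \<Rightarrow> complex poly \<Rightarrow> complex poly \<Rightarrow> complex poly \<Rightarrow> mpoly2" where
  "M a b c d = (\<chi> i j. if i = 1 then (if j = 1 then a else b) else (if j = 1 then c else d))"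

lemma M_nth[simp]: "M a b c d $ 1 $ 1 = a" "M a b c d $ 1 $ 2 = b"
  "M a b c d $ 2 $ 1 = c" "M a b c d $ 2 $ 2 = d"
  by (simp_all add: M_def)

lemma M_mult: "M a b c d ** M a' b' c' d' = M (a*a'+b*c') (a*b'+b*d') (c*a'+d*c') (c*b'+d*d')"
  by (simp add: matrix_matrix_mult_def vec_eq_iff forall_2 sum_2)

lemma mat1_M: "mat 1 = M 1 0 0 1"
  by (simp add: mat_def vec_eq_iff forall_2)

lemma beta1_M: "beta1 = M (monom 1 1) 0 (monom 1 2) (monom 1 1)"
  by (simp add: beta1_def e21_def mat_def vec_eq_iff forall_2 monom_altdef power2_eq_square)

lemma beta0_M: "beta0 = M 0 1 0 0"
  by (simp add: beta0_def e12_def vec_eq_iff forall_2)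

lemma mpow_beta1: "mpow beta1 j = M (monom 1 j) 0 (monom (of_nat j) (j+1)) (monom 1 j)"
proof (induction j)
  case 0
  then show ?case by (simp add: mpow_def mat1_M)
next
  case (Suc j)
  have "mpow beta1 (Suc j) = beta1 ** mpow beta1 j" by (simp add: mpow_def)
  also have "\<dots> = M (monom 1 (Suc j)) 0 (monom (of_nat (Suc j)) (Suc j+1)) (monom 1 (Suc j))"
    unfolding Suc by (simp add: beta1_M M_mult mult_monom add_monom algebra_simps)
  finally show ?case .
qed

lemma csmult_M: "csmult k (M a b c d) = M (smult k a) (smult k b) (smult k c) (smult k d)"
  by (simp add: csmult_def vec_eq_iff forall_2)

lemma sum_nth: "(\<Sum>j\<in>A. f j :: mpoly2) $ i $ k = (\<Sum>j\<in>A. f j $ i $ k)"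
  by (induction A rule: infinite_finite_induct) auto

lemma sum_shift2[simp]:
  "(\<Sum>j<N. if Suc (Suc j) = k then g j else 0) = (if 2 \<le> k \<and> k - 2 < N then g (k-2) else (0::'a::comm_monoid_add))"
proof -
  have "(\<Sum>j<N. if Suc (Suc j) = k then g j else 0) = (\<Sum>j<N. if 2 \<le> k \<and> j = k - 2 then g j else 0)"
    by (rule sum.cong) auto
  also have "\<dots> = (if 2 \<le> k \<and> k - 2 < N then g (k-2) else 0)"
    by (cases "2 \<le> k") (simp_all add: sum.delta')
  finally show ?thesis .
qed

theorem proposition2:
  fixes c d :: "nat \<Rightarrow> complex" and N :: nat
  assumes "(\<Sum>j<N. csmult (c j) (mpow beta1 j ** beta0))
         + (\<Sum>j<N. csmult (d j) (mpow beta1 j ** beta0 ** beta1 ** beta0)) = 0"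
  shows "\<forall>j<N. c j = 0 \<and> d j = 0"
proof -
  define C where "C k = (if k < N then c k else 0)" for k
  define D where "D k = (if k < N then d k else 0)" for k
  have P: "mpow beta1 j ** beta0 = M 0 (monom 1 j) 0 (monom (of_nat j) (j+1))" for j
    unfolding mpow_beta1 beta0_M M_mult by simp
  have Q: "mpow beta1 j ** beta0 ** beta1 ** beta0 = M 0 (monom 1 (j+2)) 0 (monom (of_nat j) (j+3))" for j
    unfolding P by (simp add: beta0_M beta1_M M_mult mult_monom add_monom algebra_simps eval_nat_numeral)
  have e12: "(\<Sum>j<N. smult (c j) (monom 1 j)) + (\<Sum>j<N. smult (d j) (monom 1 (j+2))) = 0"
  proof -
    have h: "((\<Sum>j<N. csmult (c j) (mpow beta1 j ** beta0))
         + (\<Sum>j<N. csmult (d j) (mpow beta1 j ** beta0 ** beta1 ** beta0))) $ 1 $ 2 = 0"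
      using assms by simp
    show ?thesis using h unfolding Q unfolding P by (simp add: csmult_M sum_nth)
  qed
  have e22: "(\<Sum>j<N. smult (c j) (monom (of_nat j) (j+1))) + (\<Sum>j<N. smult (d j) (monom (of_nat j) (j+3))) = 0"
  proof -
    have h: "((\<Sum>j<N. csmult (c j) (mpow beta1 j ** beta0))
         + (\<Sum>j<N. csmult (d j) (mpow beta1 j ** beta0 ** beta1 ** beta0))) $ 2 $ 2 = 0"
      using assms by simp
    show ?thesis using h unfolding Q unfolding P by (simp add: csmult_M sum_nth)
  qed
  have c1: "C k + (if 2 \<le> k then D (k-2) else 0) = 0" for k
  proof -
    have "coeff ((\<Sum>j<N. smult (c j) (monom 1 j)) + (\<Sum>j<N. smult (d j) (monom 1 (j+2)))) k = 0"
      using e12 by simp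
    thus ?thesis
      by (auto simp: coeff_sum coeff_monom C_def D_def if_distrib cong: if_cong)
  qed
  have c2: "of_nat k * C k + (if 2 \<le> k then of_nat (k-2) * D (k-2) else 0) = 0" for k
  proof -
    have "coeff ((\<Sum>j<N. smult (c j) (monom (of_nat j) (j+1))) + (\<Sum>j<N. smult (d j) (monom (of_nat j) (j+3)))) (k+1) = 0"
      using e22 by simp
    thus ?thesis
      by (auto simp: coeff_sum coeff_monom C_def D_def if_distrib mult.commute cong: if_cong)
  qed
  have Dz: "D j = 0" for j
  proof -
    have a: "C (j+2) + D j = 0" using c1[of "j+2"] by simp
    have b: "of_nat (j+2) * C (j+2) + of_nat j * D j = 0" using c2[of "j+2"] by simp
    from a have "C (j+2) = - D j" by (simp add: eq_neg_iff_add_eq_0)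
    with b have "(of_nat j - of_nat (j+2)) * D j = 0" by (simp add: algebra_simps)
    thus ?thesis by simp
  qed
  have Cz: "C j = 0" for j using c1[of j] Dz[of "j-2"] by (cases "2 \<le> j") auto
  show ?thesis proof (intro allI impI) fix j assume "j < N" then show "c j = 0 \<and> d j = 0" using Cz[of j] Dz[of j] unfolding C_def D_def by simp qed
qed

end
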